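(* Let $(G,\mathbf p)$ be a framework with $\mathbf p$ pinned with $\ell$-dimensional affine span, and let $E$ be an energy that is bar-like at $\mathbf p$, regarded as a function on $\ell$-pinned configuration space. Then $\mathbf p$ is a local minimum of $E$. Moreover, $(G,\mathbf p)$ is rigid (in the pinned sense below) if and only if $\mathbf p$ is a strict local minimum of $E$.
   Context: Fix a dimension $d$. A configuration is $\mathbf p=(\mathbf p_1,\dots,\mathbf p_n)$, $\mathbf p_i\in\mathbb R^d$; a framework $(G,\mathbf p)$ consists of a graph $G$ on $\{1,\dots,n\}$ and a configuration. A configuration $\mathbf q$ is in $\ell$-pinned position if $\mathbf q_1=0$ and, for $2\le i\le\ell+1$, $\mathbf q_i\in\mathrm{span}(e_1,\dots,e_{i-1})$; these form the $\ell$-pinned configuration space. If $\mathbf p$ has $\ell$-dimensional affine span, it is pinned if $\mathbf p_1,\dots,\mathbf p_{\ell+1}$ are affinely independent and $\mathbf p$ is in $\ell$-pinned position. $(G,\mathbf p)$ is (pinned) rigid if there is a neighborhood $U$ of $\mathbf p$ such that every $\ell$-pinned $\mathbf q\in U$ with $|\mathbf q_i-\mathbf q_j|=|\mathbf p_i-\mathbf p_j|$ for all edges $ij$ equals $\mathbf p$. An edge-based energy is $E(\mathbf q)=\sum_{ij\in E(G)}E_{ij}(|\mathbf q_i-\mathbf q_j|)$ for $\ell$-pinned $\mathbf q$, with $E_{ij}:\mathbb R\to\mathbb R$. It is bar-like at $\mathbf p$ if for each edge $ij$, $d_{ij}=|\mathbf p_i-\mathbf p_j|\ne0$, $E_{ij}$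 is analytic at $d_{ij}$, and $E_{ij}$ has a strict local minimum at $d_{ij}$. *)

theory Defs
  imports "HOL-Analysis.Analysis"
begin

text \<open>Points of R^d are vectors of type real^'d; the coordinate order needed for
  e_1, ..., e_d is given by the enumeration of the finite index type 'd.
  Vertices are 1..n; a configuration is a map nat => real^'d (only values on 1..n matter).\<close>

definition std_basis :: "nat \<Rightarrow> real^'d::enum" where
  "std_basis j = axis (Enum.enum ! (j - 1)) 1"

definition is_graph :: "nat \<Rightarrow> (nat \<times> nat) set \<Rightarrow> bool" where
  "is_graph n G \<longleftrightarrow> G \<subseteq> {(i,j). 1 \<le> i \<and> i < j \<and> j \<le> n}"

definition pinned_position :: "nat \<Rightarrow> (nat \<Rightarrow> real^'d::enum) \<Rightarrow> bool" where
  "pinned_position l q \<longleftrightarrow> q 1 = 0 \<and>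
     (\<forall>i\<in>{2..l+1}. q i \<in> span (std_basis ` {1..i-1}))"

definition pinned :: "nat \<Rightarrow> nat \<Rightarrow> (nat \<Rightarrow> real^'d::enum) \<Rightarrow> bool" where
  "pinned n l p \<longleftrightarrow> aff_dim (p ` {1..n}) = int l \<and> l + 1 \<le> n \<and>
     inj_on p {1..l+1} \<and> \<not> affine_dependent (p ` {1..l+1}) \<and> pinned_position l p"

definition conf_near :: "nat \<Rightarrow> real \<Rightarrow> (nat \<Rightarrow> real^'d) \<Rightarrow> (nat \<Rightarrow> real^'d) \<Rightarrow> bool" where
  "conf_near n eps p q \<longleftrightarrow> (\<forall>i\<in>{1..n}. dist (q i) (p i) < eps)"

definition conf_eq :: "nat \<Rightarrow> (nat \<Rightarrow> real^'d) \<Rightarrow> (nat \<Rightarrow> real^'d) \<Rightarrow> bool" where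
  "conf_eq n p q \<longleftrightarrow> (\<forall>i\<in>{1..n}. q i = p i)"

definition pinned_rigid :: "nat \<Rightarrow> nat \<Rightarrow> (nat \<times> nat) set \<Rightarrow> (nat \<Rightarrow> real^'d::enum) \<Rightarrow> bool" where
  "pinned_rigid n l G p \<longleftrightarrow> (\<exists>eps>0. \<forall>q. pinned_position l q \<and> conf_near n eps p q \<and>
       (\<forall>(i,j)\<in>G. dist (q i) (q j) = dist (p i) (p j)) \<longrightarrow> conf_eq n p q)"

definition energy :: "(nat \<times> nat) set \<Rightarrow> (nat \<Rightarrow> nat \<Rightarrow> real \<Rightarrow> real) \<Rightarrow> (nat \<Rightarrow> real^'d) \<Rightarrow> real" where
  "energy G Ef q = (\<Sum>(i,j)\<in>G. Ef i j (dist (q i) (q j)))"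

definition real_analytic_at :: "(real \<Rightarrow> real) \<Rightarrow> real \<Rightarrow> bool" where
  "real_analytic_at f a \<longleftrightarrow> (\<exists>r>0. \<exists>c::nat \<Rightarrow> real. \<forall>x. \<bar>x - a\<bar> < r \<longrightarrow>
       (\<lambda>k. c k * (x - a) ^ k) sums f x)"

definition strict_local_min_at :: "(real \<Rightarrow> real) \<Rightarrow> real \<Rightarrow> bool" where
  "strict_local_min_at f a \<longleftrightarrow> (\<exists>r>0. \<forall>x. x \<noteq> a \<and> \<bar>x - a\<bar> < r \<longrightarrow> f a < f x)"

definition bar_like :: "(nat \<times> nat) set \<Rightarrow> (nat \<Rightarrow> nat \<Rightarrow> real \<Rightarrow> real) \<Rightarrow> (nat \<Rightarrow> real^'d) \<Rightarrow> bool" where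
  "bar_like G Ef p \<longleftrightarrow> (\<forall>(i,j)\<in>G. dist (p i) (p j) \<noteq> 0 \<and>
       real_analytic_at (Ef i j) (dist (p i) (p j)) \<and>
       strict_local_min_at (Ef i j) (dist (p i) (p j)))"

definition pinned_local_min :: "nat \<Rightarrow> nat \<Rightarrow> ((nat \<Rightarrow> real^'d::enum) \<Rightarrow> real) \<Rightarrow> (nat \<Rightarrow> real^'d::enum) \<Rightarrow> bool" where
  "pinned_local_min n l F p \<longleftrightarrow> (\<exists>eps>0. \<forall>q. pinned_position l q \<and> conf_near n eps p q \<longrightarrow> F p \<le> F q)"

definition pinned_strict_local_min :: "nat \<Rightarrow> nat \<Rightarrow> ((nat \<Rightarrow> real^'d::enum) \<Rightarrow> real) \<Rightarrow> (nat \<Rightarrow> real^'d::enum) \<Rightarrow> bool" where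
  "pinned_strict_local_min n l F p \<longleftrightarrow> (\<exists>eps>0. \<forall>q. pinned_position l q \<and> conf_near n eps p q \<and>
       \<not> conf_eq n p q \<longrightarrow> F p < F q)"

end

theory Submission
  imports Defs
begin

lemma key_eps:
  fixes p :: "nat \<Rightarrow> real^'d::enum"
  assumes "is_graph n G" and "bar_like G Ef p"
  shows "\<exists>e>0. \<forall>q. conf_near n e p q \<longrightarrow> (\<forall>(i,j)\<in>G.
            Ef i j (dist (p i) (p j)) \<le> Ef i j (dist (q i) (q j)) \<and>
            (dist (q i) (q j) \<noteq> dist (p i) (p j) \<longrightarrow>
               Ef i j (dist (p i) (p j)) < Ef i j (dist (q i) (q j))))"
proof -
  have fin: "finite G"
    using assms(1) unfolding is_graph_def
    by (rule finite_subset) (rule finite_subset[of _ "{1..n} \<times> {1..n}"], auto)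
  have "\<forall>e\<in>G. \<exists>r>0. \<forall>x. x \<noteq> dist (p (fst e)) (p (snd e)) \<and> \<bar>x - dist (p (fst e)) (p (snd e))\<bar> < r
          \<longrightarrow> Ef (fst e) (snd e) (dist (p (fst e)) (p (snd e))) < Ef (fst e) (snd e) x"
    using assms(2) unfolding bar_like_def strict_local_min_at_def by auto
  then obtain R where R: "\<And>e. e \<in> G \<Longrightarrow> R e > 0 \<and> (\<forall>x. x \<noteq> dist (p (fst e)) (p (snd e)) \<and> \<bar>x - dist (p (fst e)) (p (snd e))\<bar> < R e
          \<longrightarrow> Ef (fst e) (snd e) (dist (p (fst e)) (p (snd e))) < Ef (fst e) (snd e) x)"
    by metis
  define m where "m = Min (insert 1 (R ` G))"
  have mpos: "m > 0" unfolding m_def using fin R by (subst Min_gr_iff) auto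
  have mle: "\<And>e. e \<in> G \<Longrightarrow> m \<le> R e" unfolding m_def using fin by (intro Min_le) auto
  show ?thesis
  proof (intro exI[of _ "m/2"] conjI allI impI)
    show "m/2 > 0" using mpos by simp
    fix q assume near: "conf_near n (m/2) p q"
    show "\<forall>(i,j)\<in>G. Ef i j (dist (p i) (p j)) \<le> Ef i j (dist (q i) (q j)) \<and>
            (dist (q i) (q j) \<noteq> dist (p i) (p j) \<longrightarrow>
               Ef i j (dist (p i) (p j)) < Ef i j (dist (q i) (q j)))"
    proof (clarify)
      fix i j assume ij: "(i,j) \<in> G"
      have inn: "i \<in> {1..n}" "j \<in> {1..n}" using ij assms(1) unfolding is_graph_def by auto
      have a: "dist (q i) (p i) < m/2" "dist (q j) (p j) < m/2"
        using near inn unfolding conf_near_def by auto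
      have "\<bar>dist (q i) (q j) - dist (p i) (p j)\<bar> \<le> dist (q i) (p i) + dist (q j) (p j)"
        by (smt (verit) dist_commute dist_triangle)
      with a mle[OF ij] have close: "\<bar>dist (q i) (q j) - dist (p i) (p j)\<bar> < R (i,j)" by simp
      have strict: "dist (q i) (q j) \<noteq> dist (p i) (p j) \<Longrightarrow>
               Ef i j (dist (p i) (p j)) < Ef i j (dist (q i) (q j))"
        using R[OF ij] close by auto
      show "Ef i j (dist (p i) (p j)) \<le> Ef i j (dist (q i) (q j)) \<and>
            (dist (q i) (q j) \<noteq> dist (p i) (p j) \<longrightarrow>
               Ef i j (dist (p i) (p j)) < Ef i j (dist (q i) (q j)))"
        using strict by (cases "dist (q i) (q j) = dist (p i) (p j)") auto
    qed
  qed
qed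

theorem theorem3p3:
  fixes p :: "nat \<Rightarrow> real^'d::enum"
    and G :: "(nat \<times> nat) set"
    and Ef :: "nat \<Rightarrow> nat \<Rightarrow> real \<Rightarrow> real"
    and n l :: nat
  assumes "is_graph n G"
    and "pinned n l p"
    and "bar_like G Ef p"
  shows "pinned_local_min n l (energy G Ef) p \<and>
         (pinned_rigid n l G p \<longleftrightarrow> pinned_strict_local_min n l (energy G Ef) p)"
proof -
  have fin: "finite G"
    using assms(1) unfolding is_graph_def
    by (rule finite_subset) (rule finite_subset[of _ "{1..n} \<times> {1..n}"], auto)
  obtain e where e: "e > 0" and E: "\<And>q. conf_near n e p q \<Longrightarrow> (\<forall>(i,j)\<in>G.
            Ef i j (dist (p i) (p j)) \<le> Ef i j (dist (q i) (q j)) \<and>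
            (dist (q i) (q j) \<noteq> dist (p i) (p j) \<longrightarrow>
               Ef i j (dist (p i) (p j)) < Ef i j (dist (q i) (q j))))"
    using key_eps[OF assms(1,3)] by blast
  have near_mono: "\<And>a b q. a \<le> b \<Longrightarrow> conf_near n a p q \<Longrightarrow> conf_near n b p q"
    unfolding conf_near_def by fastforce
  have le: "energy G Ef p \<le> energy G Ef q" if "conf_near n e p q" for q
    unfolding energy_def using E[OF that] by (intro sum_mono) auto
  have lt: "energy G Ef p < energy G Ef q" if "conf_near n e p q"
     and "\<not> (\<forall>(i,j)\<in>G. dist (q i) (q j) = dist (p i) (p j))" for q
  proof -
    from that(2) obtain i j where ij: "(i,j) \<in> G" "dist (q i) (q j) \<noteq> dist (p i) (p j)" by auto
    show ?thesis unfolding energy_def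
      apply (rule sum_strict_mono_ex1[OF fin])
      using E[OF that(1)] ij by (auto intro!: bexI[of _ "(i,j)"])
  qed
  have P1: "pinned_local_min n l (energy G Ef) p"
    unfolding pinned_local_min_def using e le by blast
  have P2: "pinned_strict_local_min n l (energy G Ef) p" if hyp: "pinned_rigid n l G p"
  proof -
    obtain r where r: "r > 0" and R: "\<And>q. pinned_position l q \<and> conf_near n r p q \<and>
       (\<forall>(i,j)\<in>G. dist (q i) (q j) = dist (p i) (p j)) \<Longrightarrow> conf_eq n p q"
      using hyp unfolding pinned_rigid_def by meson
    show ?thesis unfolding pinned_strict_local_min_def
    proof (intro exI[of _ "min r e"] conjI allI impI)
      show "min r e > 0" using r e by simp
      fix q assume q: "pinned_position l q \<and> conf_near n (min r e) p q \<and> \<not> conf_eq n p q"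
      have "conf_near n r p q" "conf_near n e p q"
        using q near_mono[of "min r e" r q] near_mono[of "min r e" e q] by auto
      with q R have "\<not> (\<forall>(i,j)\<in>G. dist (q i) (q j) = dist (p i) (p j))" by blast
      then show "energy G Ef p < energy G Ef q" using lt \<open>conf_near n e p q\<close> by blast
    qed
  qed
  have P3: "pinned_rigid n l G p" if hyp: "pinned_strict_local_min n l (energy G Ef) p"
  proof -
    obtain r where r: "r > 0" and R: "\<And>q. pinned_position l q \<and> conf_near n r p q \<and>
       \<not> conf_eq n p q \<Longrightarrow> energy G Ef p < energy G Ef q"
      using hyp unfolding pinned_strict_local_min_def by meson
    show ?thesis unfolding pinned_rigid_def
    proof (intro exI[of _ r] conjI allI impI)
      show "r > 0" by fact
      fix q assume q: "pinned_position l q \<and> conf_near n r p q \<and>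
       (\<forall>(i,j)\<in>G. dist (q i) (q j) = dist (p i) (p j))"
      have "energy G Ef q = energy G Ef p" unfolding energy_def
        using q by (intro sum.cong) auto
      then show "conf_eq n p q" using R q by force
    qed
  qed
  show ?thesis using P1 P2 P3 by blast
qed

end
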